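(* Let $x_0,\dots,x_{T-1}\stackrel{\text{i.i.d.}}{\sim}\mathcal{N}(0,I_d)$ and $\phi_t=\operatorname{svec}(x_tx_t^\top)$. There exists a universal constant $c>0$ such that for every $\delta\in(0,1)$, if $T\ge c\,d^4\log\!\big(c\,\tfrac{d^2}{\delta}\big)$, then $$\mathbb{P}\left(\lambda_{\min}\Big(\sum_{t=0}^{T-1}\phi_t\phi_t^\top\Big)>T\right)\ge1-\delta.$$
   Context: $\operatorname{svec}$ maps a symmetric $d\times d$ matrix $M$ to the vector in $\mathbb{R}^{d(d+1)/2}$ listing its diagonal entries $M_{ii}$ and its entries $\sqrt{2}\,M_{ij}$ for $i<j$ (in a fixed order), so that $\|\operatorname{svec}(M)\|_2=\|M\|_F$. *)

theory Defs
  imports "HOL-Probability.Probability"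
begin

text \<open>Index set of svec coordinates: pairs (i,j) with i \<le> j < d.
  Since lambda_min does not depend on the chosen ordering of coordinates, we index vectors and
  matrices directly by this finite set.\<close>
definition svec_idx :: "nat \<Rightarrow> (nat \<times> nat) set" where
  "svec_idx d = {(i, j). i \<le> j \<and> j < d}"

definition svec :: "(nat \<Rightarrow> nat \<Rightarrow> real) \<Rightarrow> nat \<times> nat \<Rightarrow> real" where
  "svec M = (\<lambda>(i, j). if i = j then M i i else sqrt 2 * M i j)"

definition real_eigenvalues :: "'a set \<Rightarrow> ('a \<Rightarrow> 'a \<Rightarrow> real) \<Rightarrow> real set" where
  "real_eigenvalues I A = {l. \<exists>v. (\<exists>k\<in>I. v k \<noteq> 0) \<and> (\<forall>k\<in>I. (\<Sum>m\<in>I. A k m * v m) = l * v k)}"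

definition lambda_min :: "'a set \<Rightarrow> ('a \<Rightarrow> 'a \<Rightarrow> real) \<Rightarrow> real" where
  "lambda_min I A = Min (real_eigenvalues I A)"

text \<open>Sample space of T i.i.d. N(0, I_d) vectors: omega (t, i) is coordinate i of x_t.\<close>
definition gauss_samples :: "nat \<Rightarrow> nat \<Rightarrow> (nat \<times> nat \<Rightarrow> real) measure" where
  "gauss_samples T d = PiM ({..<T} \<times> {..<d}) (\<lambda>_. std_normal_distribution)"

definition feature :: "(nat \<times> nat \<Rightarrow> real) \<Rightarrow> nat \<Rightarrow> nat \<times> nat \<Rightarrow> real" where
  "feature \<omega> t = svec (\<lambda>i j. \<omega> (t, i) * \<omega> (t, j))"

end

theory Submission
  imports Defs "Jordan_Normal_Form.Char_Poly"
begin

definition qf :: "'a set \<Rightarrow> ('a \<Rightarrow> 'a \<Rightarrow> real) \<Rightarrow> ('a \<Rightarrow> real) \<Rightarrow> real" where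
  "qf I M v = (\<Sum>p\<in>I. \<Sum>q\<in>I. v p * M p q * v q)"

definition nsq :: "'a set \<Rightarrow> ('a \<Rightarrow> real) \<Rightarrow> real" where
  "nsq I v = (\<Sum>p\<in>I. (v p)^2)"

lemma eig_rayleigh:
  assumes "\<forall>k\<in>I. (\<Sum>m\<in>I. M k m * v m) = l * v k"
  shows "qf I M v = l * nsq I v"
proof -
  have "qf I M v = (\<Sum>p\<in>I. v p * (\<Sum>q\<in>I. M p q * v q))"
    unfolding qf_def by (simp add: sum_distrib_left mult.assoc)
  also have "\<dots> = (\<Sum>p\<in>I. l * (v p)^2)"
    using assms by (intro sum.cong) (auto simp: power2_eq_square)
  finally show ?thesis by (simp add: nsq_def sum_distrib_left)
qed

lemma nsq_pos:
  assumes "finite I" "k \<in> I" "v k \<noteq> 0"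
  shows "nsq I v > 0"
proof -
  have "(v k)^2 \<le> nsq I v" unfolding nsq_def
    using assms by (intro member_le_sum) auto
  moreover have "(v k)^2 > 0" using assms by simp
  ultimately show ?thesis by linarith
qed

lemma finite_real_eigenvalues:
  assumes fin: "finite I"
  shows "finite (real_eigenvalues I M)"
proof -
  obtain e where e: "bij_betw e {0..<card I} I"
    using ex_bij_betw_nat_finite[OF fin] by blast
  define n where "n = card I"
  define A where "A = mat n n (\<lambda>(i,j). M (e i) (e j))"
  have A: "A \<in> carrier_mat n n" unfolding A_def by simp
  have sub: "real_eigenvalues I M \<subseteq> {x. poly (char_poly A) x = 0}"
  proof
    fix l assume "l \<in> real_eigenvalues I M"
    then obtain v where v1: "\<exists>k\<in>I. v k \<noteq> 0" and v2: "\<forall>k\<in>I. (\<Sum>m\<in>I. M k m * v m) = l * v k"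
      unfolding real_eigenvalues_def by blast
    define w where "w = vec n (\<lambda>i. v (e i))"
    have w: "w \<in> carrier_vec n" unfolding w_def by simp
    from v1 obtain k where k: "k \<in> I" "v k \<noteq> 0" by blast
    then obtain i where i: "i < n" "e i = k" using e unfolding n_def bij_betw_def by (metis atLeastLessThan_iff imageE)
    have wnz: "w \<noteq> 0\<^sub>v n"
    proof
      assume "w = 0\<^sub>v n"
      then have "w $ i = 0" using i by simp
      then show False using i k unfolding w_def by simp
    qed
    have "A *\<^sub>v w = l \<cdot>\<^sub>v w"
    proof (rule eq_vecI)
      fix i assume i: "i < dim_vec (l \<cdot>\<^sub>v w)"
      then have i': "i < n" using w by simp
      have "(A *\<^sub>v w) $ i = (\<Sum>j<n. M (e i) (e j) * v (e j))"
        using i' unfolding A_def w_def by (simp add: mult_mat_vec_def scalar_prod_def lessThan_atLeast0)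
      also have "\<dots> = (\<Sum>m\<in>I. M (e i) m * v m)"
        using sum.reindex_bij_betw[OF e, of "\<lambda>m. M (e i) m * v m"] by (simp add: n_def lessThan_atLeast0)
      also have "\<dots> = l * v (e i)" using v2 e i' unfolding bij_betw_def n_def by auto
      finally show "(A *\<^sub>v w) $ i = (l \<cdot>\<^sub>v w) $ i" using i' w_def by simp
    qed (use A w in simp)
    then have "eigenvalue A l" unfolding eigenvalue_def eigenvector_def using A w wnz by blast
    then show "l \<in> {x. poly (char_poly A) x = 0}" using eigenvalue_root_char_poly[OF A] by simp
  qed
  have "char_poly A \<noteq> 0" using degree_monic_char_poly[OF A] by auto
  then show ?thesis using poly_roots_finite finite_subset[OF sub] by blast
qed

lemma qf_cong: "(\<And>p. p \<in> I \<Longrightarrow> v p = w p) \<Longrightarrow> qf I M v = qf I M w"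
  unfolding qf_def by (intro sum.cong) auto

lemma nsq_cong: "(\<And>p. p \<in> I \<Longrightarrow> v p = w p) \<Longrightarrow> nsq I v = nsq I w"
  unfolding nsq_def by (intro sum.cong) auto

lemma qf_scale: "qf I M (\<lambda>p. c * v p) = c^2 * qf I M v"
  unfolding qf_def by (simp add: sum_distrib_left power2_eq_square mult_ac)

lemma nsq_scale: "nsq I (\<lambda>p. c * v p) = c^2 * nsq I v"
  unfolding nsq_def by (simp add: sum_distrib_left power2_eq_square mult_ac)

lemma nsq_nonneg: "nsq I v \<ge> 0"
  unfolding nsq_def by (simp add: sum_nonneg)

lemma compact_box:
  "compact (PiE UNIV (\<lambda>p. if p \<in> I then {-1..1::real} else {0}))"
proof -
  have "compactin (product_topology (\<lambda>_. euclidean) UNIV)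
          (PiE UNIV (\<lambda>p. if p \<in> I then {-1..1::real} else {0}))"
    by (subst compactin_PiE) auto
  then show ?thesis by (simp add: euclidean_product_topology)
qed

lemma continuous_nsq: "continuous_on S (\<lambda>v. nsq I v)"
  unfolding nsq_def
  by (intro continuous_intros continuous_on_product_then_coordinatewise continuous_on_id)

lemma continuous_qf: "continuous_on S (\<lambda>v. qf I M v)"
  unfolding qf_def
  by (intro continuous_intros continuous_on_product_then_coordinatewise continuous_on_id)

lemma exists_rayleigh_min:
  assumes fin: "finite I" and ne: "I \<noteq> {}"
  shows "\<exists>v0. nsq I v0 = 1 \<and> (\<forall>v. qf I M v0 * nsq I v \<le> qf I M v)"
proof -
  define S where "S = PiE UNIV (\<lambda>p. if p \<in> I then {-1..1::real} else {0}) \<inter> {v. nsq I v = 1}"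
  have "closed {v. nsq I v = 1}"
    using continuous_closed_preimage_constant[OF continuous_nsq[of UNIV I] closed_UNIV, of 1]
    by (simp add: vimage_def Collect_conj_eq)
  then have cS: "compact S" unfolding S_def by (intro compact_Int_closed compact_box)
  obtain p0 where p0: "p0 \<in> I" using ne by blast
  define e0 where "e0 = (\<lambda>p. if p = p0 then 1 else (0::real))"
  have "nsq I e0 = (\<Sum>p\<in>I. if p = p0 then 1 else 0)" unfolding nsq_def
    by (intro sum.cong) (auto simp: e0_def)
  then have "nsq I e0 = 1" using fin p0 by (simp add: sum.delta)
  then have "e0 \<in> S" unfolding S_def e0_def using p0 by (auto simp: PiE_iff)
  then have neS: "S \<noteq> {}" by blast
  obtain v0 where v0: "v0 \<in> S" and min: "\<And>w. w \<in> S \<Longrightarrow> qf I M v0 \<le> qf I M w"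
    using continuous_attains_inf[OF cS neS continuous_qf] by blast
  have nv0: "nsq I v0 = 1" using v0 unfolding S_def by simp
  have "qf I M v0 * nsq I v \<le> qf I M v" for v
  proof (cases "nsq I v = 0")
    case True
    then have "\<forall>p\<in>I. v p = 0" using nsq_pos[OF fin, of _ v] by force
    then have "qf I M v = 0" unfolding qf_def by simp
    then show ?thesis using True by simp
  next
    case False
    then have pos: "nsq I v > 0" using nsq_nonneg[of I v] by linarith
    define s where "s = 1 / sqrt (nsq I v)"
    define w where "w = (\<lambda>p. if p \<in> I then s * v p else 0)"
    have s2: "s^2 * nsq I v = 1" unfolding s_def using pos by (simp add: power_divide)
    have nw: "nsq I w = 1" using s2 nsq_scale[of I s v] nsq_cong[of I w "\<lambda>p. s * v p"]
      unfolding w_def by simp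
    have "w p \<in> {-1..1}" if "p \<in> I" for p
    proof -
      have "(w p)^2 \<le> nsq I w" unfolding nsq_def using fin that by (intro member_le_sum) auto
      then have "(w p)^2 \<le> 1^2" using nw by simp
      then have "\<bar>w p\<bar> \<le> 1" by (metis abs_le_square_iff abs_one)
      then show ?thesis by auto
    qed
    then have "w \<in> S" unfolding S_def using nw by (auto simp: PiE_iff w_def)
    then have "qf I M v0 \<le> qf I M w" by (rule min)
    also have "qf I M w = s^2 * qf I M v" using qf_scale[of I M s v] qf_cong[of I w "\<lambda>p. s * v p"]
      unfolding w_def by simp
    finally have "qf I M v0 \<le> s^2 * qf I M v" .
    then have "qf I M v0 * nsq I v \<le> s^2 * qf I M v * nsq I v" using pos by simp
    also have "\<dots> = qf I M v" using s2 by (simp add: mult_ac)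
    finally show ?thesis .
  qed
  then show ?thesis using nv0 by blast
qed

lemma qf_add: 
  assumes sym: "\<forall>p\<in>I. \<forall>q\<in>I. M p q = M q p"
  shows "qf I M (\<lambda>p. u p + t * w p) = qf I M u + 2 * t * (\<Sum>p\<in>I. w p * (\<Sum>q\<in>I. M p q * u q)) + t^2 * qf I M w"
proof -
  have "qf I M (\<lambda>p. u p + t * w p) = (\<Sum>p\<in>I. \<Sum>q\<in>I. u p * M p q * u q + t * (w p * M p q * u q) + t * (u p * M p q * w q) + t^2 * (w p * M p q * w q))"
    unfolding qf_def by (intro sum.cong refl) (simp add: algebra_simps power2_eq_square)
  also have "\<dots> = qf I M u + t * (\<Sum>p\<in>I. \<Sum>q\<in>I. w p * M p q * u q) + t * (\<Sum>p\<in>I. \<Sum>q\<in>I. u p * M p q * w q) + t^2 * qf I M w"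
    unfolding qf_def by (simp add: sum.distrib sum_distrib_left)
  also have "(\<Sum>p\<in>I. \<Sum>q\<in>I. u p * M p q * w q) = (\<Sum>q\<in>I. \<Sum>p\<in>I. u p * M p q * w q)"
    by (rule sum.swap)
  also have "\<dots> = (\<Sum>p\<in>I. \<Sum>q\<in>I. w p * M p q * u q)"
    using sym by (intro sum.cong refl) (simp add: mult_ac)
  also have "(\<Sum>p\<in>I. \<Sum>q\<in>I. w p * M p q * u q) = (\<Sum>p\<in>I. w p * (\<Sum>q\<in>I. M p q * u q))"
    by (simp add: sum_distrib_left mult_ac)
  finally show ?thesis by simp
qed

lemma nsq_add: "nsq I (\<lambda>p. u p + t * w p) = nsq I u + 2 * t * (\<Sum>p\<in>I. w p * u p) + t^2 * nsq I w"
  unfolding nsq_def by (simp add: sum.distrib sum_distrib_left power2_eq_square algebra_simps)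

lemma exists_min_eig:
  assumes fin: "finite I" and ne: "I \<noteq> {}"
    and sym: "\<forall>p\<in>I. \<forall>q\<in>I. M p q = M q p"
  shows "\<exists>\<mu>\<in>real_eigenvalues I M. \<forall>v. \<mu> * nsq I v \<le> qf I M v"
proof -
  obtain v0 where nv0: "nsq I v0 = 1" and mn: "\<And>v. qf I M v0 * nsq I v \<le> qf I M v"
    using exists_rayleigh_min[OF fin ne, of M] by blast
  define \<mu> where "\<mu> = qf I M v0"
  define g where "g = (\<lambda>p. (\<Sum>q\<in>I. M p q * v0 q) - \<mu> * v0 p)"
  define N where "N = nsq I g"
  define C where "C = qf I M g - \<mu> * nsq I g"
  define B where "B = (\<Sum>p\<in>I. g p * (\<Sum>q\<in>I. M p q * v0 q))"
  define V where "V = (\<Sum>p\<in>I. g p * v0 p)"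
  have BV: "B - \<mu> * V = N"
  proof -
    have "\<mu> * V = (\<Sum>p\<in>I. g p * (\<mu> * v0 p))"
      unfolding V_def by (simp add: sum_distrib_left mult.left_commute)
    then have "B - \<mu> * V = (\<Sum>p\<in>I. g p * (\<Sum>q\<in>I. M p q * v0 q) - g p * (\<mu> * v0 p))"
      unfolding B_def by (simp add: sum_subtractf)
    also have "\<dots> = (\<Sum>p\<in>I. (g p)^2)"
      by (intro sum.cong refl) (simp add: g_def power2_eq_square right_diff_distrib)
    finally show ?thesis unfolding N_def nsq_def .
  qed
  have key: "0 \<le> 2 * t * N + t^2 * C" for t
  proof -
    have "\<mu> * nsq I (\<lambda>p. v0 p + t * g p) \<le> qf I M (\<lambda>p. v0 p + t * g p)"
      using mn unfolding \<mu>_def by blast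
    moreover have "qf I M (\<lambda>p. v0 p + t * g p) = \<mu> + 2 * t * B + t^2 * qf I M g"
      using qf_add[of I M, OF sym, of v0 t g] unfolding B_def \<mu>_def by simp
    moreover have "nsq I (\<lambda>p. v0 p + t * g p) = 1 + 2 * t * V + t^2 * nsq I g"
      unfolding nsq_add V_def using nv0 by simp
    ultimately have "0 \<le> 2 * t * (B - \<mu> * V) + t^2 * C" unfolding C_def
      by (simp add: algebra_simps)
    then show ?thesis using BV by simp
  qed
  have N0: "N \<ge> 0" unfolding N_def by (rule nsq_nonneg)
  have "N \<le> 0"
  proof (rule ccontr)
    assume "\<not> N \<le> 0"
    then have Np: "N > 0" by simp
    define s where "s = N / (\<bar>C\<bar> + 1)"
    have sp: "s > 0" unfolding s_def using Np by simp
    have "0 \<le> 2 * (-s) * N + (-s)^2 * C" by (rule key)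
    then have "2 * s * N \<le> s^2 * C" by simp
    then have "2 * N \<le> s * C" using sp by (simp add: power2_eq_square)
    also have "s * C \<le> s * \<bar>C\<bar>" using sp by (simp add: mult_left_mono)
    also have "s * \<bar>C\<bar> \<le> N" unfolding s_def using Np by (simp add: field_simps)
    finally show False using Np by simp
  qed
  then have "N = 0" using N0 by simp
  then have g0: "\<forall>p\<in>I. g p = 0" using nsq_pos[OF fin, of _ g] unfolding N_def by force
  have eig: "\<forall>k\<in>I. (\<Sum>m\<in>I. M k m * v0 m) = \<mu> * v0 k" using g0 unfolding g_def by simp
  have "\<exists>k\<in>I. v0 k \<noteq> 0"
  proof (rule ccontr)
    assume "\<not> ?thesis"
    then have "nsq I v0 = 0" unfolding nsq_def by simp
    then show False using nv0 by simp
  qed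
  then have "\<mu> \<in> real_eigenvalues I M" unfolding real_eigenvalues_def using eig by blast
  moreover have "\<forall>v. \<mu> * nsq I v \<le> qf I M v" using mn unfolding \<mu>_def by blast
  ultimately show ?thesis by blast
qed

lemma lambda_min_ge:
  assumes fin: "finite I" and ne: "I \<noteq> {}"
    and sym: "\<forall>p\<in>I. \<forall>q\<in>I. M p q = M q p"
    and bnd: "\<And>v. c * nsq I v \<le> qf I M v"
  shows "c \<le> lambda_min I M"
proof -
  have fe: "finite (real_eigenvalues I M)" by (rule finite_real_eigenvalues[OF fin])
  obtain mu where "mu \<in> real_eigenvalues I M" using exists_min_eig[of I M, OF fin ne sym] by (elim bexE)
  then have nee: "real_eigenvalues I M \<noteq> {}" by (rule ex_in_conv[THEN iffD1, OF exI])
  have "lambda_min I M \<in> real_eigenvalues I M" unfolding lambda_min_def using Min_in[OF fe nee] .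
  then obtain v where v1: "\<exists>k\<in>I. v k \<noteq> 0" and v2: "\<forall>k\<in>I. (\<Sum>m\<in>I. M k m * v m) = lambda_min I M * v k"
    unfolding real_eigenvalues_def by (elim CollectE exE conjE)
  obtain k where k: "k \<in> I" "v k \<noteq> 0" using v1 by (elim bexE)
  have np: "nsq I v > 0" using nsq_pos[of I k v] fin k by blast
  have "c * nsq I v \<le> lambda_min I M * nsq I v" 
    using bnd[of v] unfolding eig_rayleigh[OF v2] .
  then show ?thesis using np by (simp add: mult_le_cancel_right)
qed

lemma lambda_min_gt_imp:
  assumes fin: "finite I" and ne: "I \<noteq> {}"
    and sym: "\<forall>p\<in>I. \<forall>q\<in>I. M p q = M q p"
    and gt: "lambda_min I M > c"
  shows "\<exists>c'>c. \<forall>v. c' * nsq I v \<le> qf I M v"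
proof -
  obtain mu where mu: "mu \<in> real_eigenvalues I M" and b: "\<forall>v. mu * nsq I v \<le> qf I M v"
    using exists_min_eig[of I M, OF fin ne sym] by (elim bexE)
  have "lambda_min I M \<le> mu" unfolding lambda_min_def using Min_le[OF finite_real_eigenvalues[OF fin] mu] .
  then have "mu > c" using gt by linarith
  then show ?thesis using b by blast
qed

definition rapprox :: "real \<Rightarrow> nat \<Rightarrow> real" where
  "rapprox a n = of_int \<lfloor>a * (real n + 1)\<rfloor> / (real n + 1)"

lemma rapprox_Rats: "rapprox a n \<in> \<rat>"
  unfolding rapprox_def by (intro Rats_divide Rats_of_int) (simp add: Rats_add)

lemma rapprox_tendsto: "(\<lambda>n. rapprox a n) \<longlonglongrightarrow> a"
proof (rule tendsto_sandwich[of "\<lambda>n. a - 1 / (real n + 1)" _ _ "\<lambda>n. a"])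
  show "\<forall>\<^sub>F n in sequentially. a - 1 / (real n + 1) \<le> rapprox a n"
  proof (intro always_eventually allI)
    fix n
    have p: "real n + 1 > 0" by simp
    have "a * (real n + 1) - 1 \<le> of_int \<lfloor>a * (real n + 1)\<rfloor>" by linarith
    then have "(a * (real n + 1) - 1) / (real n + 1) \<le> rapprox a n"
      unfolding rapprox_def using p by (intro divide_right_mono) auto
    moreover have "(a * (real n + 1) - 1) / (real n + 1) = a - 1 / (real n + 1)"
      using p by (simp add: field_simps)
    ultimately show "a - 1 / (real n + 1) \<le> rapprox a n" by simp
  qed
  show "\<forall>\<^sub>F n in sequentially. rapprox a n \<le> a"
  proof (intro always_eventually allI)
    fix n
    have p: "real n + 1 > 0" by simp
    have "of_int \<lfloor>a * (real n + 1)\<rfloor> \<le> a * (real n + 1)" by linarith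
    then show "rapprox a n \<le> a" unfolding rapprox_def using p by (simp add: field_simps)
  qed
  have "(\<lambda>n. 1 / (real n + 1)) \<longlonglongrightarrow> 0"
    using LIMSEQ_inverse_real_of_nat by (simp add: inverse_eq_divide add.commute)
  then show "(\<lambda>n. a - 1 / (real n + 1)) \<longlonglongrightarrow> a"
    using tendsto_diff[OF tendsto_const[of a]] by fastforce
qed simp

definition ratvecs :: "'a set \<Rightarrow> ('a \<Rightarrow> real) set" where
  "ratvecs I = PiE I (\<lambda>_. \<rat>)"

lemma countable_ratvecs: "finite I \<Longrightarrow> countable (ratvecs I)"
  unfolding ratvecs_def by (intro countable_PiE countable_rat)

lemma ratvecs_ne: "ratvecs I \<noteq> {}"
  unfolding ratvecs_def PiE_eq_empty_iff using Rats_0 by blast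

lemma density_qf:
  assumes fin: "finite I"
    and H: "\<forall>v\<in>ratvecs I. c * nsq I v \<le> qf I M v"
  shows "c * nsq I v \<le> qf I M v"
proof -
  define r where "r n = restrict (\<lambda>p. rapprox (v p) n) I" for n
  have rin: "r n \<in> ratvecs I" for n unfolding r_def ratvecs_def using rapprox_Rats by auto
  have conv: "(\<lambda>n. r n p) \<longlonglongrightarrow> v p" if "p \<in> I" for p
    using that rapprox_tendsto unfolding r_def by simp
  have "(\<lambda>n. qf I M (r n) - c * nsq I (r n)) \<longlonglongrightarrow> qf I M v - c * nsq I v"
    unfolding qf_def nsq_def
    by (intro tendsto_intros conv) 
  moreover have "\<forall>n. 0 \<le> qf I M (r n) - c * nsq I (r n)" using H rin by (simp add: algebra_simps)
  ultimately have "0 \<le> qf I M v - c * nsq I v"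
    by (intro LIMSEQ_le_const[of "\<lambda>n. qf I M (r n) - c * nsq I (r n)"]) auto
  then show ?thesis by simp
qed

lemma prob_space_N: "prob_space std_normal_distribution"
  using prob_space_normal_density by simp

lemma sets_N [simp]: "sets std_normal_distribution = sets borel"
  by simp

lemma prob_space_gs: "prob_space (gauss_samples T d)"
  unfolding gauss_samples_def by (intro prob_space_PiM prob_space_N)

lemma coord_meas_gen:
  assumes "sets M = sets borel"
  shows "(\<lambda>\<omega>. \<omega> x) \<in> borel_measurable (PiM K (\<lambda>_. M))"
proof (cases "x \<in> K")
  case True
  then have "(\<lambda>\<omega>. \<omega> x) \<in> measurable (PiM K (\<lambda>_. M)) M" by measurable
  then show ?thesis using assms measurable_cong_sets by blast
next
  case False
  have "\<And>\<omega>. \<omega> \<in> space (PiM K (\<lambda>_. M)) \<Longrightarrow> \<omega> x = undefined"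
    using False by (auto simp: space_PiM PiE_def extensional_def)
  then show ?thesis by (subst measurable_cong[where g="\<lambda>\<omega>. undefined"]) auto
qed

lemma coord_meas [measurable]: "(\<lambda>\<omega>. \<omega> x) \<in> borel_measurable (gauss_samples T d)"
  unfolding gauss_samples_def by (rule coord_meas_gen) simp

lemma coord_meas_borel [measurable]: "(\<lambda>\<omega>. \<omega> x) \<in> borel_measurable (PiM K (\<lambda>_. borel))"
  by (rule coord_meas_gen) simp

lemma feature_meas_gen:
  assumes "\<And>x. (\<lambda>\<omega>. \<omega> x) \<in> borel_measurable M"
  shows "(\<lambda>\<omega>. feature \<omega> t p) \<in> borel_measurable M"
proof -
  obtain i j where p: "p = (i, j)" by (cases p)
  have m: "(\<lambda>\<omega>. \<omega> x) \<in> borel_measurable M" for x by (rule assms)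
  show ?thesis unfolding feature_def svec_def p using m[of "(t,i)"] m[of "(t,j)"] by simp
qed

lemma feature_meas [measurable]: "(\<lambda>\<omega>. feature \<omega> t p) \<in> borel_measurable (gauss_samples T d)"
  by (rule feature_meas_gen) simp

lemma feature_meas_borel [measurable]: "(\<lambda>\<omega>. feature \<omega> t p) \<in> borel_measurable (PiM K (\<lambda>_. borel))"
  by (rule feature_meas_gen) simp

definition Amat :: "nat \<Rightarrow> nat set \<Rightarrow> (nat \<times> nat \<Rightarrow> real) \<Rightarrow> (nat \<times> nat) \<Rightarrow> (nat \<times> nat) \<Rightarrow> real" where
  "Amat d B \<omega> p q = (\<Sum>t\<in>B. feature \<omega> t p * feature \<omega> t q)"

lemma svec_idx_finite: "finite (svec_idx d)"
proof -
  have "svec_idx d \<subseteq> {..<d} \<times> {..<d}" unfolding svec_idx_def by auto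
  then show ?thesis by (rule finite_subset) auto
qed

lemma svec_idx_ne: "d \<ge> 1 \<Longrightarrow> svec_idx d \<noteq> {}"
  unfolding svec_idx_def by (rule ex_in_conv[THEN iffD1]) (rule exI[of _ "(0,0)"], simp)

lemma svec_idx_card: "card (svec_idx d) \<le> d^2"
proof -
  have "svec_idx d \<subseteq> {..<d} \<times> {..<d}" unfolding svec_idx_def by auto
  then have "card (svec_idx d) \<le> card ({..<d} \<times> {..<d})" by (intro card_mono) auto
  then show ?thesis by (simp add: card_cartesian_product power2_eq_square)
qed

lemma event_measurable:
  assumes d: "d \<ge> 1"
  shows "{\<omega> \<in> space (gauss_samples T d). lambda_min (svec_idx d)
            (\<lambda>p q. \<Sum>t<T. feature \<omega> t p * feature \<omega> t q) > real T} \<in> sets (gauss_samples T d)"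
proof -
  let ?I = "svec_idx d"
  let ?R = "ratvecs ?I"
  let ?v = "\<lambda>j. from_nat_into ?R j"
  have fin: "finite ?I" by (rule svec_idx_finite)
  have ne: "?I \<noteq> {}" by (rule svec_idx_ne[OF d])
  have cR: "countable ?R" by (rule countable_ratvecs[OF fin])
  have neR: "?R \<noteq> {}" by (rule ratvecs_ne)
  have "{\<omega> \<in> space (gauss_samples T d). lambda_min ?I (\<lambda>p q. \<Sum>t<T. feature \<omega> t p * feature \<omega> t q) > real T}
     = {\<omega> \<in> space (gauss_samples T d). \<exists>n::nat. \<forall>j::nat.
           (real T + 1 / (real n + 1)) * nsq ?I (?v j) \<le> qf ?I (Amat d {..<T} \<omega>) (?v j)}"
  proof (intro Collect_cong conj_cong refl iffI)
    fix \<omega>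
    let ?M = "\<lambda>p q. \<Sum>t<T. feature \<omega> t p * feature \<omega> t q"
    have sym: "\<forall>p\<in>?I. \<forall>q\<in>?I. ?M p q = ?M q p" by (simp add: mult.commute)
    have AM: "Amat d {..<T} \<omega> = ?M" by (simp add: Amat_def fun_eq_iff)
    {
      assume "lambda_min ?I ?M > real T"
      then obtain c' where c': "c' > real T" "\<forall>v. c' * nsq ?I v \<le> qf ?I ?M v"
        using lambda_min_gt_imp[of ?I ?M, OF fin ne sym] by blast
      obtain n where n: "1 / (real n + 1) < c' - real T"
        using reals_Archimedean[of "c' - real T"] c'(1) by (auto simp: inverse_eq_divide add.commute)
      have "(real T + 1 / (real n + 1)) * nsq ?I v \<le> qf ?I ?M v" for v
      proof -
        have "(real T + 1 / (real n + 1)) * nsq ?I v \<le> c' * nsq ?I v"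
          using n nsq_nonneg[of ?I v] by (intro mult_right_mono) auto
        then show ?thesis using c'(2) by (meson order_trans)
      qed
      then show "\<exists>n::nat. \<forall>j::nat. (real T + 1 / (real n + 1)) * nsq ?I (?v j) \<le> qf ?I (Amat d {..<T} \<omega>) (?v j)"
        unfolding AM by blast
    }
    {
      assume "\<exists>n::nat. \<forall>j::nat. (real T + 1 / (real n + 1)) * nsq ?I (?v j) \<le> qf ?I (Amat d {..<T} \<omega>) (?v j)"
      then obtain n :: nat where n: "\<forall>j::nat. (real T + 1 / (real n + 1)) * nsq ?I (?v j) \<le> qf ?I ?M (?v j)"
        unfolding AM by blast
      have "\<forall>v\<in>?R. (real T + 1 / (real n + 1)) * nsq ?I v \<le> qf ?I ?M v"
      proof
        fix v assume "v \<in> ?R"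
        then obtain j where "v = ?v j" using from_nat_into_surj[OF cR] by blast
        then show "(real T + 1 / (real n + 1)) * nsq ?I v \<le> qf ?I ?M v" using n by simp
      qed
      then have "\<And>v. (real T + 1 / (real n + 1)) * nsq ?I v \<le> qf ?I ?M v"
        using density_qf[OF fin] by blast
      then have "real T + 1 / (real n + 1) \<le> lambda_min ?I ?M"
        using lambda_min_ge[of ?I ?M, OF fin ne sym] by blast
      moreover have "1 / (real n + 1) > 0" by simp
      ultimately show "lambda_min ?I ?M > real T" by linarith
    }
  qed
  also have "\<dots> \<in> sets (gauss_samples T d)"
    unfolding qf_def nsq_def Amat_def by measurable
  finally show ?thesis .
qed

lemma prod_list_map_eq_prod_count:
  "prod_list (map f xs) = (\<Prod>x\<in>set xs. f x ^ count_list xs x)"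
proof (induction xs)
  case (Cons x xs)
  show ?case (is "?l = ?r")
  proof cases
    assume xin: "x \<in> set xs"
    have "?r = (\<Prod>y\<in>set xs. f y ^ count_list xs y * (if x = y then f y else 1))"
      using xin by (simp add: insert_absorb) (intro prod.cong, auto simp: mult.commute)
    also have "\<dots> = (\<Prod>y\<in>set xs. f y ^ count_list xs y) * f x"
      using xin by (simp add: prod.distrib prod.delta)
    finally show ?thesis by (simp add: Cons.IH mult_ac)
  next
    assume "x \<notin> set xs"
    hence "\<And>xa. xa \<in> set xs \<Longrightarrow> x \<noteq> xa" by blast
    thus ?thesis by (simp add: Cons.IH \<open>x \<notin> set xs\<close>)
  qed
qed simp

lemma isserlis_comb:
  fixes mom :: "nat \<Rightarrow> real"
  assumes "mom 1 = 0" "mom 2 = 1" "mom 3 = 0" "mom 4 = 3"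
  shows "(\<Prod>s\<in>set [a,b,c,e]. mom (count_list [a,b,c,e] s)) =
    (if a = b \<and> c = e then 1 else 0) + (if a = c \<and> b = e then 1 else 0) + (if a = e \<and> b = c then 1 else 0)"
  using assms by (cases "a = b"; cases "a = c"; cases "a = e"; cases "b = c"; cases "b = e"; cases "c = e")
    (simp_all add: insert_commute numeral_eq_Suc)

abbreviation "coordsA T d \<equiv> {..<T} \<times> {..<(d::nat)}"

lemma space_gs: "space (gauss_samples T d) = PiE (coordsA T d) (\<lambda>_. UNIV)"
  unfolding gauss_samples_def by (simp add: space_PiM)

lemma distr_coord:
  assumes "a \<in> coordsA T d"
  shows "distr (gauss_samples T d) std_normal_distribution (\<lambda>\<omega>. \<omega> a) = std_normal_distribution"
  unfolding gauss_samples_def using assms by (intro distr_PiM_component prob_space_N) auto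

lemma coord_meas_N: "a \<in> coordsA T d \<Longrightarrow> (\<lambda>\<omega>. \<omega> a) \<in> measurable (gauss_samples T d) std_normal_distribution"
  unfolding gauss_samples_def by (rule measurable_component_singleton)

lemma indep_coords:
  assumes ne: "coordsA T d \<noteq> {}"
  shows "prob_space.indep_vars (gauss_samples T d) (\<lambda>_. borel) (\<lambda>k \<omega>. \<omega> k) (coordsA T d)"
proof -
  interpret prob_space "gauss_samples T d" by (rule prob_space_gs)
  let ?A = "coordsA T d"
  let ?G = "gauss_samples T d"
  have lhs: "distr ?G (PiM ?A (\<lambda>_. borel)) (\<lambda>x. \<lambda>i\<in>?A. x i) = ?G"
  proof -
    have "distr ?G (PiM ?A (\<lambda>_. borel)) (\<lambda>x. \<lambda>i\<in>?A. x i) = distr ?G ?G (\<lambda>x. x)"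
      by (intro distr_cong refl)
         (auto simp: gauss_samples_def space_PiM PiE_def extensional_def intro!: sets_PiM_cong)
    then show ?thesis by simp
  qed
  have rhs: "PiM ?A (\<lambda>i. distr ?G borel (\<lambda>x. x i)) = ?G"
  proof -
    have "PiM ?A (\<lambda>i. distr ?G borel (\<lambda>x. x i)) = PiM ?A (\<lambda>_. std_normal_distribution)"
    proof (rule PiM_cong)
      fix i assume i: "i \<in> ?A"
      have "distr ?G borel (\<lambda>x. x i) = distr ?G std_normal_distribution (\<lambda>x. x i)"
        by (intro distr_cong) auto
      then show "distr ?G borel (\<lambda>x. x i) = std_normal_distribution" using distr_coord[OF i] by simp
    qed simp
    then show ?thesis unfolding gauss_samples_def .
  qed
  show ?thesis
    by (subst indep_vars_iff_distr_eq_PiM'[OF ne]) (auto simp: lhs rhs)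
qed

definition mom :: "nat \<Rightarrow> real" where
  "mom n = integral\<^sup>L std_normal_distribution (\<lambda>x. x ^ n)"

lemma mom_values: "mom 0 = 1" "mom 1 = 0" "mom 2 = 1" "mom 3 = 0" "mom 4 = 3" "mom 8 = 105"
proof -
  interpret prob_space std_normal_distribution by (rule prob_space_N)
  show "mom 0 = 1" unfolding mom_def using prob_space by simp
  show "mom 1 = 0" unfolding mom_def using integral_std_normal_distribution_moment_odd[of 1] by simp
  show "mom 3 = 0" unfolding mom_def using integral_std_normal_distribution_moment_odd[of 3] by simp
  show "mom 2 = 1" unfolding mom_def using std_normal_distribution_even_moments(1)[of 1] by simp
  show "mom 4 = 3" unfolding mom_def using std_normal_distribution_even_moments(1)[of 2]
    by (simp add: fact_numeral)
  show "mom 8 = 105" unfolding mom_def using std_normal_distribution_even_moments(1)[of 4]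
    by (simp add: fact_numeral)
qed

lemma coord_moment:
  assumes a: "a \<in> coordsA T d"
  shows "integrable (gauss_samples T d) (\<lambda>\<omega>. (\<omega> a) ^ n)"
    and "integral\<^sup>L (gauss_samples T d) (\<lambda>\<omega>. (\<omega> a) ^ n) = mom n"
proof -
  have m: "(\<lambda>\<omega>. \<omega> a) \<in> measurable (gauss_samples T d) std_normal_distribution" by (rule coord_meas_N[OF a])
  have "integrable (distr (gauss_samples T d) std_normal_distribution (\<lambda>\<omega>. \<omega> a)) (\<lambda>x. x ^ n)"
    unfolding distr_coord[OF a] by (rule integrable_std_normal_distribution_moment)
  then show "integrable (gauss_samples T d) (\<lambda>\<omega>. (\<omega> a) ^ n)"
    using integrable_distr_eq[OF m, of "\<lambda>x. x ^ n"] by simp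
  have "integral\<^sup>L (distr (gauss_samples T d) std_normal_distribution (\<lambda>\<omega>. \<omega> a)) (\<lambda>x. x ^ n)
      = integral\<^sup>L (gauss_samples T d) (\<lambda>\<omega>. (\<omega> a) ^ n)"
    by (rule integral_distr[OF m]) simp
  then show "integral\<^sup>L (gauss_samples T d) (\<lambda>\<omega>. (\<omega> a) ^ n) = mom n"
    unfolding distr_coord[OF a] mom_def by simp
qed

lemma prod_moment:
  assumes L: "set L \<subseteq> coordsA T d"
  shows "integrable (gauss_samples T d) (\<lambda>\<omega>. prod_list (map \<omega> L))"
    and "integral\<^sup>L (gauss_samples T d) (\<lambda>\<omega>. prod_list (map \<omega> L)) = (\<Prod>s\<in>set L. mom (count_list L s))"
proof -
  interpret prob_space "gauss_samples T d" by (rule prob_space_gs)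
  have eq: "(\<lambda>\<omega>. prod_list (map \<omega> L)) = (\<lambda>\<omega>. \<Prod>s\<in>set L. (\<omega> s) ^ count_list L s)"
    by (simp add: prod_list_map_eq_prod_count)
  have ind: "indep_vars (\<lambda>_. borel) (\<lambda>s \<omega>. (\<omega> s) ^ count_list L s) (set L)"
  proof (cases "L = []")
    case True then show ?thesis by (simp add: indep_vars_def indep_sets_def)
  next
    case False
    then have ne: "coordsA T d \<noteq> {}" using L by (cases L) auto
    show ?thesis
      by (rule indep_vars_compose2[OF indep_vars_subset[OF indep_coords[OF ne] L]]) simp
  qed
  have int: "\<And>s. s \<in> set L \<Longrightarrow> integrable (gauss_samples T d) (\<lambda>\<omega>. (\<omega> s) ^ count_list L s)"
    using coord_moment(1) L by blast
  show "integrable (gauss_samples T d) (\<lambda>\<omega>. prod_list (map \<omega> L))"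
    unfolding eq by (rule indep_vars_integrable[OF _ ind int]) simp
  have "integral\<^sup>L (gauss_samples T d) (\<lambda>\<omega>. prod_list (map \<omega> L)) = (\<Prod>s\<in>set L. integral\<^sup>L (gauss_samples T d) (\<lambda>\<omega>. (\<omega> s) ^ count_list L s))"
    unfolding eq by (rule indep_vars_lebesgue_integral[OF _ ind int]) simp
  also have "\<dots> = (\<Prod>s\<in>set L. mom (count_list L s))"
    using coord_moment(2) L by (intro prod.cong) blast+
  finally show "integral\<^sup>L (gauss_samples T d) (\<lambda>\<omega>. prod_list (map \<omega> L)) = (\<Prod>s\<in>set L. mom (count_list L s))" .
qed

definition cc :: "nat \<times> nat \<Rightarrow> real" where
  "cc p = (if fst p = snd p then 1 else sqrt 2)"

definition Sig :: "nat \<times> nat \<Rightarrow> nat \<times> nat \<Rightarrow> real" where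
  "Sig p q = (if fst p = snd p \<and> fst q = snd q then 1 else 0) + (if p = q then 2 else 0)"

lemma feature_eq: "feature \<omega> t p = cc p * \<omega> (t, fst p) * \<omega> (t, snd p)"
  by (cases p) (simp add: feature_def svec_def cc_def)

lemma feat_prod: "feature \<omega> t p * feature \<omega> t q =
   cc p * cc q * prod_list (map \<omega> [(t, fst p), (t, snd p), (t, fst q), (t, snd q)])"
  by (simp add: feature_eq mult_ac)

lemma E_feat:
  assumes t: "t < T" and p: "p \<in> svec_idx d" and q: "q \<in> svec_idx d"
  shows "integrable (gauss_samples T d) (\<lambda>\<omega>. feature \<omega> t p * feature \<omega> t q)"
    and "integral\<^sup>L (gauss_samples T d) (\<lambda>\<omega>. feature \<omega> t p * feature \<omega> t q) = Sig p q"
proof -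
  obtain i j where pij: "p = (i,j)" by (cases p)
  obtain k l where qkl: "q = (k,l)" by (cases q)
  let ?L = "[(t, i), (t, j), (t, k), (t, l)]"
  have L: "set ?L \<subseteq> coordsA T d" using t p q pij qkl by (auto simp: svec_idx_def)
  have fp: "(\<lambda>\<omega>. feature \<omega> t p * feature \<omega> t q) = (\<lambda>\<omega>. cc p * cc q * prod_list (map \<omega> ?L))"
    by (simp add: feat_prod pij qkl)
  show "integrable (gauss_samples T d) (\<lambda>\<omega>. feature \<omega> t p * feature \<omega> t q)"
    unfolding fp using prod_moment(1)[OF L] by simp
  have "integral\<^sup>L (gauss_samples T d) (\<lambda>\<omega>. feature \<omega> t p * feature \<omega> t q)
      = cc p * cc q * (\<Prod>s\<in>set ?L. mom (count_list ?L s))"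
    unfolding fp using prod_moment(2)[OF L] by simp
  also have "(\<Prod>s\<in>set ?L. mom (count_list ?L s)) =
    (if (t,i) = (t,j) \<and> (t,k) = (t,l) then 1 else 0) + (if (t,i) = (t,k) \<and> (t,j) = (t,l) then 1 else 0)
      + (if (t,i) = (t,l) \<and> (t,j) = (t,k) then 1 else 0)"
    by (rule isserlis_comb[OF mom_values(2-5)])
  also have "cc p * cc q * \<dots> = Sig p q"
    using p q unfolding pij qkl svec_idx_def cc_def Sig_def
    by (cases "i = j"; cases "k = l") auto
  finally show "integral\<^sup>L (gauss_samples T d) (\<lambda>\<omega>. feature \<omega> t p * feature \<omega> t q) = Sig p q" .
qed

lemma xy2: "2 * (x * y) \<le> x^2 + (y::real)^2"
  using sum_squares_bound[of x y] by (simp add: mult.assoc)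

lemma amgm4:
  fixes a b c e :: real
  assumes "a \<ge> 0" "b \<ge> 0" "c \<ge> 0" "e \<ge> 0"
  shows "4 * (a * b * c * e) \<le> a^4 + b^4 + c^4 + e^4"
proof -
  define X where "X = a^2 + b^2"
  define Y where "Y = c^2 + e^2"
  have 1: "2 * (a * b) \<le> X" unfolding X_def by (rule xy2)
  have 2: "2 * (c * e) \<le> Y" unfolding Y_def by (rule xy2)
  have "(2 * (a * b)) * (2 * (c * e)) \<le> X * Y"
    using 1 2 assms by (intro mult_mono) (auto simp: X_def)
  moreover have "2 * (X * Y) \<le> X^2 + Y^2" by (rule xy2)
  moreover have "X^2 = a^4 + b^4 + 2 * (a^2 * b^2)" unfolding X_def by (simp add: power2_eq_square power4_eq_xxxx algebra_simps)
  moreover have "Y^2 = c^4 + e^4 + 2 * (c^2 * e^2)" unfolding Y_def by (simp add: power2_eq_square power4_eq_xxxx algebra_simps)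
  moreover have "2 * (a^2 * b^2) \<le> a^4 + b^4" using xy2[of "a^2" "b^2"] by (simp add: power_mult[symmetric])
  moreover have "2 * (c^2 * e^2) \<le> c^4 + e^4" using xy2[of "c^2" "e^2"] by (simp add: power_mult[symmetric])
  moreover have "(2 * (a * b)) * (2 * (c * e)) = 4 * (a * b * c * e)" by (simp add: mult_ac)
  ultimately show ?thesis by linarith
qed

lemma feat_sq_bound:
  "(feature \<omega> t p * feature \<omega> t q)^2 \<le>
     (\<omega> (t, fst p))^8 + (\<omega> (t, snd p))^8 + (\<omega> (t, fst q))^8 + (\<omega> (t, snd q))^8"
proof -
  let ?a = "(\<omega> (t, fst p))^2" and ?b = "(\<omega> (t, snd p))^2" and ?c = "(\<omega> (t, fst q))^2" and ?e = "(\<omega> (t, snd q))^2"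
  have ccb: "(cc p * cc q)^2 \<le> 4"
    by (simp add: cc_def power_mult_distrib)
  have "(feature \<omega> t p * feature \<omega> t q)^2 = (cc p * cc q)^2 * (?a * ?b * ?c * ?e)"
    by (simp add: feature_eq power_mult_distrib mult_ac)
  also have "\<dots> \<le> 4 * (?a * ?b * ?c * ?e)"
    by (intro mult_right_mono ccb) simp
  also have "4 * (?a * ?b * ?c * ?e) \<le> ?a^4 + ?b^4 + ?c^4 + ?e^4"
    by (rule amgm4) simp_all
  finally show ?thesis by (simp add: power_mult[symmetric])
qed

lemma E_feat_sq:
  assumes t: "t < T" and p: "p \<in> svec_idx d" and q: "q \<in> svec_idx d"
  shows "integrable (gauss_samples T d) (\<lambda>\<omega>. (feature \<omega> t p * feature \<omega> t q)^2)"
    and "integral\<^sup>L (gauss_samples T d) (\<lambda>\<omega>. (feature \<omega> t p * feature \<omega> t q)^2) \<le> 420"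
proof -
  let ?G = "gauss_samples T d"
  have in8: "\<And>a. a \<in> coordsA T d \<Longrightarrow> integrable ?G (\<lambda>\<omega>. (\<omega> a)^8)"
    using coord_moment(1) by blast
  have m8: "\<And>a. a \<in> coordsA T d \<Longrightarrow> integral\<^sup>L ?G (\<lambda>\<omega>. (\<omega> a)^8) = 105"
    using coord_moment(2) mom_values by simp
  have cs: "(t, fst p) \<in> coordsA T d" "(t, snd p) \<in> coordsA T d" "(t, fst q) \<in> coordsA T d" "(t, snd q) \<in> coordsA T d"
    using t p q by (auto simp: svec_idx_def)
  let ?f = "\<lambda>\<omega>. (\<omega> (t, fst p))^8 + (\<omega> (t, snd p))^8 + (\<omega> (t, fst q))^8 + (\<omega> (t, snd q))^8"
  have fi: "integrable ?G ?f" using in8 cs by (intro Bochner_Integration.integrable_add) auto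
  have fv: "integral\<^sup>L ?G ?f = 420"
    using in8 cs m8 by (simp add: Bochner_Integration.integral_add)
  have gi: "integrable ?G (\<lambda>\<omega>. (feature \<omega> t p * feature \<omega> t q)^2)"
  proof (rule Bochner_Integration.integrable_bound[OF fi])
    show "(\<lambda>\<omega>. (feature \<omega> t p * feature \<omega> t q)^2) \<in> borel_measurable ?G" by measurable
    show "AE x in ?G. norm ((feature x t p * feature x t q)^2) \<le> norm (?f x)"
      using feat_sq_bound by (intro AE_I2) (simp add: abs_of_nonneg)
  qed
  show "integrable ?G (\<lambda>\<omega>. (feature \<omega> t p * feature \<omega> t q)^2)" by (rule gi)
  have "integral\<^sup>L ?G (\<lambda>\<omega>. (feature \<omega> t p * feature \<omega> t q)^2) \<le> integral\<^sup>L ?G ?f"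
    by (rule integral_mono[OF gi fi feat_sq_bound])
  then show "integral\<^sup>L ?G (\<lambda>\<omega>. (feature \<omega> t p * feature \<omega> t q)^2) \<le> 420" using fv by simp
qed

definition Yv :: "nat \<Rightarrow> nat \<times> nat \<Rightarrow> nat \<times> nat \<Rightarrow> (nat \<times> nat \<Rightarrow> real) \<Rightarrow> real" where
  "Yv t p q \<omega> = feature \<omega> t p * feature \<omega> t q - Sig p q"

lemma Yv_meas [measurable]: "Yv t p q \<in> borel_measurable (gauss_samples T d)"
  unfolding Yv_def by measurable

lemma Yv_meas_borel [measurable]: "Yv t p q \<in> borel_measurable (PiM K (\<lambda>_. borel))"
  unfolding Yv_def by measurable

lemma feature_restrict:
  assumes "p \<in> svec_idx d" "{t} \<times> {..<d} \<subseteq> K"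
  shows "feature (restrict \<omega> K) t p = feature \<omega> t p"
proof -
  obtain i j where pij: "p = (i, j)" by (cases p)
  have "(t, i) \<in> K" "(t, j) \<in> K" using assms unfolding pij svec_idx_def by auto
  then show ?thesis unfolding feature_eq pij by simp
qed

lemma Yv_restrict:
  assumes "p \<in> svec_idx d" "q \<in> svec_idx d" "{t} \<times> {..<d} \<subseteq> K"
  shows "Yv t p q (restrict \<omega> K) = Yv t p q \<omega>"
  using feature_restrict[OF assms(1,3)] feature_restrict[OF assms(2,3)] unfolding Yv_def by simp

lemma Yv_int:
  assumes t: "t < T" and p: "p \<in> svec_idx d" and q: "q \<in> svec_idx d"
  shows "integrable (gauss_samples T d) (Yv t p q)" "integral\<^sup>L (gauss_samples T d) (Yv t p q) = 0"
proof -
  interpret prob_space "gauss_samples T d" by (rule prob_space_gs)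
  have "integrable (gauss_samples T d) (\<lambda>\<omega>. feature \<omega> t p * feature \<omega> t q - Sig p q)"
    using E_feat(1)[OF t p q] by simp
  then show "integrable (gauss_samples T d) (Yv t p q)" unfolding Yv_def[abs_def] .
  have "integral\<^sup>L (gauss_samples T d) (\<lambda>\<omega>. feature \<omega> t p * feature \<omega> t q - Sig p q) = 0"
    using E_feat[OF t p q] by (simp add: prob_space)
  then show "integral\<^sup>L (gauss_samples T d) (Yv t p q) = 0" unfolding Yv_def[abs_def] .
qed

lemma Yv_sq:
  assumes t: "t < T" and p: "p \<in> svec_idx d" and q: "q \<in> svec_idx d"
  shows "integrable (gauss_samples T d) (\<lambda>\<omega>. Yv t p q \<omega> * Yv t p q \<omega>)"
    "integral\<^sup>L (gauss_samples T d) (\<lambda>\<omega>. Yv t p q \<omega> * Yv t p q \<omega>) \<le> 420"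
proof -
  interpret prob_space "gauss_samples T d" by (rule prob_space_gs)
  let ?f = "\<lambda>\<omega>. feature \<omega> t p * feature \<omega> t q"
  have eq: "(\<lambda>\<omega>. Yv t p q \<omega> * Yv t p q \<omega>) = (\<lambda>\<omega>. (?f \<omega>)^2 - 2 * Sig p q * ?f \<omega> + (Sig p q)^2)"
    by (simp add: Yv_def fun_eq_iff power2_eq_square algebra_simps)
  have i1: "integrable (gauss_samples T d) (\<lambda>\<omega>. (?f \<omega>)^2)" by (rule E_feat_sq(1)[OF t p q])
  have i2: "integrable (gauss_samples T d) ?f" by (rule E_feat(1)[OF t p q])
  show "integrable (gauss_samples T d) (\<lambda>\<omega>. Yv t p q \<omega> * Yv t p q \<omega>)"
    unfolding eq using i1 i2 by simp
  have "integral\<^sup>L (gauss_samples T d) (\<lambda>\<omega>. Yv t p q \<omega> * Yv t p q \<omega>)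
      = integral\<^sup>L (gauss_samples T d) (\<lambda>\<omega>. (?f \<omega>)^2) - 2 * Sig p q * Sig p q + (Sig p q)^2"
    unfolding eq using i1 i2 E_feat(2)[OF t p q] by (simp add: prob_space)
  also have "\<dots> \<le> 420"
  proof -
    have a: "integral\<^sup>L (gauss_samples T d) (\<lambda>\<omega>. (?f \<omega>)^2) \<le> 420" by (rule E_feat_sq(2)[OF t p q])
    have b: "0 \<le> Sig p q * Sig p q" by simp
    have c: "(Sig p q)^2 = Sig p q * Sig p q" by (rule power2_eq_square)
    show ?thesis using a b c by linarith
  qed
  finally show "integral\<^sup>L (gauss_samples T d) (\<lambda>\<omega>. Yv t p q \<omega> * Yv t p q \<omega>) \<le> 420" .
qed

lemma Yv_cross:
  assumes t: "t < T" and s: "s < T" and ts: "t \<noteq> s"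
    and p: "p \<in> svec_idx d" and q: "q \<in> svec_idx d"
  shows "integrable (gauss_samples T d) (\<lambda>\<omega>. Yv t p q \<omega> * Yv s p q \<omega>)"
    "integral\<^sup>L (gauss_samples T d) (\<lambda>\<omega>. Yv t p q \<omega> * Yv s p q \<omega>) = 0"
proof -
  interpret prob_space "gauss_samples T d" by (rule prob_space_gs)
  have d: "d \<ge> 1" using p unfolding svec_idx_def by auto
  have "(t, 0) \<in> coordsA T d" using t d by auto
  then have ne: "coordsA T d \<noteq> {}" by blast
  let ?K1 = "{t} \<times> {..<d}" and ?K2 = "{s} \<times> {..<d}"
  have iv: "indep_var (PiM ?K1 (\<lambda>_. borel)) (\<lambda>\<omega>. restrict (\<lambda>i. \<omega> i) ?K1)
                      (PiM ?K2 (\<lambda>_. borel)) (\<lambda>\<omega>. restrict (\<lambda>i. \<omega> i) ?K2)"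
    by (rule indep_var_restrict[OF indep_coords[OF ne]]) (use t s ts in auto)
  have iv2: "indep_var borel (Yv t p q \<circ> (\<lambda>\<omega>. restrict (\<lambda>i. \<omega> i) ?K1)) borel (Yv s p q \<circ> (\<lambda>\<omega>. restrict (\<lambda>i. \<omega> i) ?K2))"
    by (rule indep_var_compose[OF iv]) measurable
  have e1: "Yv t p q \<circ> (\<lambda>\<omega>. restrict (\<lambda>i. \<omega> i) ?K1) = Yv t p q"
    using Yv_restrict[OF p q, of t ?K1] by (auto simp: fun_eq_iff)
  have e2: "Yv s p q \<circ> (\<lambda>\<omega>. restrict (\<lambda>i. \<omega> i) ?K2) = Yv s p q"
    using Yv_restrict[OF p q, of s ?K2] by (auto simp: fun_eq_iff)
  have iv3: "indep_var borel (Yv t p q) borel (Yv s p q)" using iv2 unfolding e1 e2 .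
  show "integrable (gauss_samples T d) (\<lambda>\<omega>. Yv t p q \<omega> * Yv s p q \<omega>)"
    by (rule indep_var_integrable[OF iv3 Yv_int(1)[OF t p q] Yv_int(1)[OF s p q]])
  show "integral\<^sup>L (gauss_samples T d) (\<lambda>\<omega>. Yv t p q \<omega> * Yv s p q \<omega>) = 0"
    using indep_var_lebesgue_integral[OF iv3 Yv_int(1)[OF t p q] Yv_int(1)[OF s p q]]
      Yv_int(2)[OF t p q] by simp
qed

definition Fdev :: "nat \<Rightarrow> nat set \<Rightarrow> (nat \<times> nat \<Rightarrow> real) \<Rightarrow> real" where
  "Fdev d B \<omega> = (\<Sum>p\<in>svec_idx d. \<Sum>q\<in>svec_idx d. (\<Sum>t\<in>B. Yv t p q \<omega>)^2)"

lemma Fdev_meas [measurable]: "Fdev d B \<in> borel_measurable (gauss_samples T d')"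
  unfolding Fdev_def by measurable

lemma Fdev_meas_borel [measurable]: "Fdev d B \<in> borel_measurable (PiM K (\<lambda>_. borel))"
  unfolding Fdev_def by measurable

lemma Fdev_nonneg: "Fdev d B \<omega> \<ge> 0"
  unfolding Fdev_def by (intro sum_nonneg) auto

lemma E_sumsq:
  assumes B: "B \<subseteq> {..<T}" and p: "p \<in> svec_idx d" and q: "q \<in> svec_idx d"
  shows "integrable (gauss_samples T d) (\<lambda>\<omega>. (\<Sum>t\<in>B. Yv t p q \<omega>)^2)"
    "integral\<^sup>L (gauss_samples T d) (\<lambda>\<omega>. (\<Sum>t\<in>B. Yv t p q \<omega>)^2) \<le> 420 * real (card B)"
proof -
  have finB: "finite B" using B finite_subset by blast
  have eq: "(\<lambda>\<omega>. (\<Sum>t\<in>B. Yv t p q \<omega>)^2) = (\<lambda>\<omega>. \<Sum>t\<in>B. \<Sum>s\<in>B. Yv t p q \<omega> * Yv s p q \<omega>)"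
    by (simp add: fun_eq_iff power2_eq_square sum_product)
  have int: "integrable (gauss_samples T d) (\<lambda>\<omega>. Yv t p q \<omega> * Yv s p q \<omega>)" if "t \<in> B" "s \<in> B" for t s
  proof (cases "t = s")
    case True then show ?thesis using Yv_sq(1)[OF _ p q, of t T] that B by auto
  next
    case False then show ?thesis using Yv_cross(1)[OF _ _ False p q] that B by auto
  qed
  show "integrable (gauss_samples T d) (\<lambda>\<omega>. (\<Sum>t\<in>B. Yv t p q \<omega>)^2)"
    unfolding eq using int by (intro Bochner_Integration.integrable_sum) auto
  have "integral\<^sup>L (gauss_samples T d) (\<lambda>\<omega>. (\<Sum>t\<in>B. Yv t p q \<omega>)^2)
     = (\<Sum>t\<in>B. \<Sum>s\<in>B. integral\<^sup>L (gauss_samples T d) (\<lambda>\<omega>. Yv t p q \<omega> * Yv s p q \<omega>))"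
    unfolding eq using int by (simp add: Bochner_Integration.integral_sum Bochner_Integration.integrable_sum)
  also have "\<dots> = (\<Sum>t\<in>B. integral\<^sup>L (gauss_samples T d) (\<lambda>\<omega>. Yv t p q \<omega> * Yv t p q \<omega>))"
  proof (intro sum.cong refl)
    fix t assume t: "t \<in> B"
    have "(\<Sum>s\<in>B. integral\<^sup>L (gauss_samples T d) (\<lambda>\<omega>. Yv t p q \<omega> * Yv s p q \<omega>))
        = (\<Sum>s\<in>B. if s = t then integral\<^sup>L (gauss_samples T d) (\<lambda>\<omega>. Yv t p q \<omega> * Yv t p q \<omega>) else 0)"
      using Yv_cross(2)[OF _ _ _ p q] t B by (intro sum.cong refl) auto
    also have "\<dots> = integral\<^sup>L (gauss_samples T d) (\<lambda>\<omega>. Yv t p q \<omega> * Yv t p q \<omega>)"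
      using finB t by (simp add: sum.delta)
    finally show "(\<Sum>s\<in>B. integral\<^sup>L (gauss_samples T d) (\<lambda>\<omega>. Yv t p q \<omega> * Yv s p q \<omega>))
        = integral\<^sup>L (gauss_samples T d) (\<lambda>\<omega>. Yv t p q \<omega> * Yv t p q \<omega>)" .
  qed
  also have "\<dots> \<le> (\<Sum>t\<in>B. (420::real))"
    using Yv_sq(2)[OF _ p q] B by (intro sum_mono) auto
  finally show "integral\<^sup>L (gauss_samples T d) (\<lambda>\<omega>. (\<Sum>t\<in>B. Yv t p q \<omega>)^2) \<le> 420 * real (card B)"
    by (simp add: mult.commute)
qed

lemma E_Fdev:
  assumes B: "B \<subseteq> {..<T}"
  shows "integrable (gauss_samples T d) (Fdev d B)"
    "integral\<^sup>L (gauss_samples T d) (Fdev d B) \<le> 420 * real (card B) * (card (svec_idx d))^2"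
proof -
  let ?I = "svec_idx d"
  have F: "Fdev d B = (\<lambda>\<omega>. \<Sum>p\<in>?I. \<Sum>q\<in>?I. (\<Sum>t\<in>B. Yv t p q \<omega>)^2)"
    by (simp add: Fdev_def[abs_def])
  show "integrable (gauss_samples T d) (Fdev d B)"
    unfolding F using E_sumsq(1)[OF B] by (intro Bochner_Integration.integrable_sum) auto
  have "integral\<^sup>L (gauss_samples T d) (Fdev d B) = (\<Sum>p\<in>?I. \<Sum>q\<in>?I. integral\<^sup>L (gauss_samples T d) (\<lambda>\<omega>. (\<Sum>t\<in>B. Yv t p q \<omega>)^2))"
    unfolding F using E_sumsq(1)[OF B]
    by (simp add: Bochner_Integration.integral_sum Bochner_Integration.integrable_sum)
  also have "\<dots> \<le> (\<Sum>p\<in>?I. \<Sum>q\<in>?I. 420 * real (card B))"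
    using E_sumsq(2)[OF B] by (intro sum_mono) auto
  also have "\<dots> = 420 * real (card B) * (card ?I)^2" by (simp add: power2_eq_square mult_ac)
  finally show "integral\<^sup>L (gauss_samples T d) (Fdev d B) \<le> 420 * real (card B) * (card ?I)^2" .
qed

lemma Sig_split: "Sig p q = (if fst p = snd p then 1 else 0) * (if fst q = snd q then 1 else 0) + (if p = q then 2 else 0)"
  unfolding Sig_def by auto

lemma qf_Sig:
  assumes fin: "finite I"
  shows "qf I Sig v \<ge> 2 * nsq I v"
proof -
  let ?a = "\<lambda>p. (if fst p = snd p then 1 else 0) * v p"
  have "qf I Sig v = (\<Sum>p\<in>I. \<Sum>q\<in>I. ?a p * ?a q + (if p = q then 2 * (v p * v q) else 0))"
    unfolding qf_def Sig_split by (intro sum.cong refl) (auto simp: algebra_simps)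
  also have "\<dots> = (\<Sum>p\<in>I. \<Sum>q\<in>I. ?a p * ?a q) + (\<Sum>p\<in>I. \<Sum>q\<in>I. (if p = q then 2 * (v p * v q) else 0))"
    by (simp add: sum.distrib)
  also have "(\<Sum>p\<in>I. \<Sum>q\<in>I. ?a p * ?a q) = (\<Sum>p\<in>I. ?a p)^2"
    by (simp add: power2_eq_square sum_product)
  also have "(\<Sum>p\<in>I. \<Sum>q\<in>I. (if p = q then 2 * (v p * v q) else 0)) = (\<Sum>p\<in>I. 2 * (v p * v p))"
    using fin by (intro sum.cong refl) (simp add: sum.delta)
  also have "\<dots> = 2 * nsq I v" unfolding nsq_def by (simp add: sum_distrib_left power2_eq_square)
  finally show ?thesis by simp
qed

lemma Amat_split:
  "Amat d B \<omega> p q = real (card B) * Sig p q + (\<Sum>t\<in>B. Yv t p q \<omega>)"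
  unfolding Amat_def Yv_def by (simp add: sum_subtractf)

lemma block_good:
  assumes fin: "finite I" and I: "I = svec_idx d"
    and F: "Fdev d B \<omega> \<le> (real (card B))^2 / 4"
  shows "3 / 2 * real (card B) * nsq I v \<le> qf I (Amat d B \<omega>) v"
proof -
  let ?m = "real (card B)"
  let ?E = "\<lambda>p q. \<Sum>t\<in>B. Yv t p q \<omega>"
  define R where "R = (\<Sum>p\<in>I. \<Sum>q\<in>I. v p * ?E p q * v q)"
  have qfA: "qf I (Amat d B \<omega>) v = ?m * qf I Sig v + R"
    unfolding qf_def R_def Amat_split by (simp add: sum_distrib_left sum.distrib algebra_simps)
  have "R = (\<Sum>pq\<in>I \<times> I. (v (fst pq) * v (snd pq)) * ?E (fst pq) (snd pq))"
    unfolding R_def by (simp add: sum.cartesian_product mult_ac case_prod_beta)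
  then have "R^2 \<le> (\<Sum>pq\<in>I \<times> I. (v (fst pq) * v (snd pq))^2) * (\<Sum>pq\<in>I \<times> I. (?E (fst pq) (snd pq))^2)"
    using Cauchy_Schwarz_ineq_sum by simp
  also have "(\<Sum>pq\<in>I \<times> I. (v (fst pq) * v (snd pq))^2) = (nsq I v)^2"
    unfolding nsq_def by (simp add: sum.cartesian_product power2_eq_square sum_product mult_ac case_prod_beta)
  also have "(\<Sum>pq\<in>I \<times> I. (?E (fst pq) (snd pq))^2) = Fdev d B \<omega>"
    unfolding Fdev_def I by (simp add: sum.cartesian_product case_prod_beta)
  finally have R2: "R^2 \<le> (nsq I v)^2 * Fdev d B \<omega>" .
  also have "\<dots> \<le> (nsq I v)^2 * (?m^2 / 4)" using F by (intro mult_left_mono) auto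
  also have "\<dots> = (nsq I v * ?m / 2)^2" by (simp add: power_mult_distrib power_divide)
  finally have "R^2 \<le> (nsq I v * ?m / 2)^2" .
  moreover have "0 \<le> nsq I v * ?m / 2" using nsq_nonneg[of I v] by simp
  ultimately have "\<bar>R\<bar> \<le> nsq I v * ?m / 2"
    using abs_le_square_iff[of R "nsq I v * ?m / 2"] by simp
  then have Rb: "- (nsq I v * ?m / 2) \<le> R" by linarith
  have "?m * (2 * nsq I v) \<le> ?m * qf I Sig v" using qf_Sig[OF fin, of v] by (intro mult_left_mono) auto
  moreover have "?m * (2 * nsq I v) = 2 * (?m * nsq I v)" by simp
  moreover have "nsq I v * ?m / 2 = (?m * nsq I v) / 2" by simp
  moreover have "3 / 2 * ?m * nsq I v = 3 / 2 * (?m * nsq I v)" by simp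
  ultimately show ?thesis using qfA Rb by linarith
qed

definition Bk :: "nat \<Rightarrow> nat \<Rightarrow> nat set" where
  "Bk m b = {b * m ..< b * m + m}"

definition Zb :: "nat \<Rightarrow> nat \<Rightarrow> nat \<Rightarrow> (nat \<times> nat \<Rightarrow> real) \<Rightarrow> real" where
  "Zb d m b \<omega> = (if Fdev d (Bk m b) \<omega> \<ge> (real m)^2 / 4 then 1 else 0)"

lemma Zb_meas [measurable]: "Zb d m b \<in> borel_measurable (gauss_samples T d')"
  unfolding Zb_def[abs_def] by measurable

lemma Zb_meas_borel [measurable]: "Zb d m b \<in> borel_measurable (PiM K (\<lambda>_. borel))"
  unfolding Zb_def[abs_def] by measurable

lemma Fdev_restrict:
  assumes "\<And>t. t \<in> B \<Longrightarrow> {t} \<times> {..<d} \<subseteq> K"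
  shows "Fdev d B (restrict \<omega> K) = Fdev d B \<omega>"
  unfolding Fdev_def using Yv_restrict assms by (intro sum.cong refl) (simp cong: sum.cong)

lemma Zb_indep:
  assumes d: "d \<ge> 1" and km: "k * m \<le> T" and m: "m > 0"
  shows "prob_space.indep_vars (gauss_samples T d) (\<lambda>_. borel) (Zb d m) {..<k}"
proof -
  interpret prob_space "gauss_samples T d" by (rule prob_space_gs)
  define K where "K b = Bk m b \<times> {..<d}" for b
  show ?thesis
  proof (cases "k = 0")
    case True then show ?thesis by (simp add: indep_vars_def indep_sets_def)
  next
    case False
    then have "T > 0" using km m by (metis gr0I mult_is_0 le_0_eq)
    then have "(0, 0) \<in> coordsA T d" using d by auto
    then have ne: "coordsA T d \<noteq> {}" by blast
    have Ksub: "K b \<subseteq> coordsA T d" if "b \<in> {..<k}" for b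
    proof -
      have "b * m + m \<le> k * m" using that by (metis Suc_leI add.commute lessThan_iff mult_Suc mult_le_mono1)
      then show ?thesis unfolding K_def Bk_def using km by auto
    qed
    have disj: "disjoint_family_on K {..<k}"
    unfolding disjoint_family_on_def
    proof (intro ballI impI)
      fix a b assume "a \<in> {..<k}" "b \<in> {..<k}" "a \<noteq> b"
      then have "a < b \<or> b < a" by auto
      then have "Bk m a \<inter> Bk m b = {}"
      proof
        assume "a < b" then have "a * m + m \<le> b * m" by (metis Suc_leI add.commute mult_Suc mult_le_mono1)
        then show ?thesis unfolding Bk_def by auto
      next
        assume "b < a" then have "b * m + m \<le> a * m" by (metis Suc_leI add.commute mult_Suc mult_le_mono1)
        then show ?thesis unfolding Bk_def by auto
      qed
      then show "K a \<inter> K b = {}" unfolding K_def by auto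
    qed
    have iv: "indep_vars (\<lambda>b. PiM (K b) (\<lambda>_. borel)) (\<lambda>b \<omega>. restrict (\<lambda>i. \<omega> i) (K b)) {..<k}"
      by (rule indep_vars_restrict[OF indep_coords[OF ne] Ksub disj])
    have iv2: "indep_vars (\<lambda>_. borel) (\<lambda>b \<omega>. Zb d m b (restrict (\<lambda>i. \<omega> i) (K b))) {..<k}"
      by (rule indep_vars_compose2[OF iv, of "\<lambda>b \<rho>. Zb d m b \<rho>" "\<lambda>_. borel"]) (rule Zb_meas_borel)
    have eq: "Zb d m b (restrict (\<lambda>i. \<omega> i) (K b)) = Zb d m b \<omega>" for b \<omega>
    proof -
      have "Fdev d (Bk m b) (restrict \<omega> (K b)) = Fdev d (Bk m b) \<omega>"
        by (rule Fdev_restrict) (auto simp: K_def)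
      then show ?thesis unfolding Zb_def by simp
    qed
    show ?thesis using iv2 unfolding eq by simp
  qed
qed

lemma E_Zb:
  assumes d: "d \<ge> 1" and b: "b < k" and km: "k * m \<le> T" and mdef: "m = 13440 * d^4"
  shows "integrable (gauss_samples T d) (Zb d m b)" "integral\<^sup>L (gauss_samples T d) (Zb d m b) \<le> 1 / 8"
proof -
  interpret prob_space "gauss_samples T d" by (rule prob_space_gs)
  have mpos: "real m > 0" using mdef d by simp
  have Bsub: "Bk m b \<subseteq> {..<T}"
  proof -
    have "b * m + m \<le> k * m" using b by (metis Suc_leI add.commute mult_Suc mult_le_mono1)
    then show ?thesis unfolding Bk_def using km by auto
  qed
  have cB: "card (Bk m b) = m" unfolding Bk_def by simp
  show iZ: "integrable (gauss_samples T d) (Zb d m b)"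
    by (rule Bochner_Integration.integrable_bound[of _ "\<lambda>_. 1::real"]) (auto simp: Zb_def)
  have iF: "integrable (gauss_samples T d) (Fdev d (Bk m b))" by (rule E_Fdev(1)[OF Bsub])
  have le: "Zb d m b \<omega> \<le> Fdev d (Bk m b) \<omega> * (4 / (real m)^2)" for \<omega>
    using Fdev_nonneg[of d "Bk m b" \<omega>] mpos unfolding Zb_def by (auto simp: field_simps)
  have "integral\<^sup>L (gauss_samples T d) (Zb d m b) \<le> integral\<^sup>L (gauss_samples T d) (\<lambda>\<omega>. Fdev d (Bk m b) \<omega> * (4 / (real m)^2))"
    using iZ iF le by (intro integral_mono) auto
  also have "\<dots> = integral\<^sup>L (gauss_samples T d) (Fdev d (Bk m b)) * (4 / (real m)^2)" by simp
  also have "\<dots> \<le> (420 * real m * (card (svec_idx d))^2) * (4 / (real m)^2)"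
    using E_Fdev(2)[OF Bsub] cB by (intro mult_right_mono) auto
  also have "\<dots> \<le> (420 * real m * (real d^2)^2) * (4 / (real m)^2)"
  proof -
    have "real (card (svec_idx d)) \<le> real d ^ 2" using svec_idx_card[of d] by (simp add: of_nat_le_iff[symmetric])
    then have "(real (card (svec_idx d)))^2 \<le> (real d^2)^2" by (intro power_mono) auto
    then show ?thesis using mpos by (intro mult_right_mono mult_left_mono) auto
  qed
  also have "\<dots> = 1 / 8" using mpos d unfolding mdef by (simp add: field_simps power2_eq_square power4_eq_xxxx)
  finally show "integral\<^sup>L (gauss_samples T d) (Zb d m b) \<le> 1 / 8" .
qed

lemma hoeffding_step:
  assumes d: "d \<ge> 1" and k: "k \<ge> 1" and km: "k * m \<le> T" and mdef: "m = 13440 * d^4"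
  shows "measure (gauss_samples T d) {\<omega> \<in> space (gauss_samples T d). (\<Sum>b<k. Zb d m b \<omega>) \<ge> real k / 4}
          \<le> exp (- real k / 32)"
proof -
  interpret prob_space "gauss_samples T d" by (rule prob_space_gs)
  have mpos: "m > 0" using mdef d by simp
  define \<mu> where "\<mu> = (\<Sum>b<k. expectation (Zb d m b))"
  interpret H: Hoeffding_ineq "gauss_samples T d" "{..<k}" "Zb d m" "\<lambda>_. 0" "\<lambda>_. 1" \<mu>
  proof unfold_locales
    show "indep_vars (\<lambda>_. borel) (Zb d m) {..<k}" by (rule Zb_indep[OF d km mpos])
  qed (auto simp: \<mu>_def Zb_def)
  have mu: "\<mu> \<le> real k / 8"
  proof -
    have "\<mu> \<le> (\<Sum>b<k. 1 / 8)" unfolding \<mu>_def using E_Zb(2)[OF d _ km mdef] by (intro sum_mono) auto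
    then show ?thesis by simp
  qed
  have "measure (gauss_samples T d) {\<omega> \<in> space (gauss_samples T d). (\<Sum>b<k. Zb d m b \<omega>) \<ge> real k / 4}
     \<le> measure (gauss_samples T d) {\<omega> \<in> space (gauss_samples T d). (\<Sum>b<k. Zb d m b \<omega>) \<ge> \<mu> + real k / 8}"
    using mu by (intro finite_measure_mono) auto
  also have "\<dots> \<le> exp (-2 * (real k / 8)^2 / (\<Sum>i<k. (1 - 0)^2))"
    by (rule H.Hoeffding_ineq_ge) (use k in auto)
  also have "-2 * (real k / 8)^2 / (\<Sum>i<k. (1 - 0)^2) = - real k / 32"
    using k by (simp add: power2_eq_square field_simps)
  finally show ?thesis .
qed

lemma qf_Amat: "qf I (Amat d B \<omega>) v = (\<Sum>t\<in>B. (\<Sum>p\<in>I. v p * feature \<omega> t p)^2)"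
proof -
  have "qf I (Amat d B \<omega>) v = (\<Sum>p\<in>I. \<Sum>q\<in>I. \<Sum>t\<in>B. (v p * feature \<omega> t p) * (v q * feature \<omega> t q))"
    unfolding qf_def Amat_def by (simp add: sum_distrib_left sum_distrib_right mult_ac)
  also have "\<dots> = (\<Sum>p\<in>I. \<Sum>t\<in>B. \<Sum>q\<in>I. (v p * feature \<omega> t p) * (v q * feature \<omega> t q))"
    by (intro sum.cong refl sum.swap)
  also have "\<dots> = (\<Sum>t\<in>B. \<Sum>p\<in>I. \<Sum>q\<in>I. (v p * feature \<omega> t p) * (v q * feature \<omega> t q))"
    by (rule sum.swap)
  also have "\<dots> = (\<Sum>t\<in>B. (\<Sum>p\<in>I. v p * feature \<omega> t p)^2)"
    by (simp add: power2_eq_square sum_product)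
  finally show ?thesis .
qed

lemma det_good:
  assumes d: "d \<ge> 1" and m: "m > 0" and km: "k * m \<le> T"
    and Z: "(\<Sum>b<k. Zb d m b \<omega>) < real k / 4"
  shows "9 / 8 * real k * real m * nsq (svec_idx d) v \<le> qf (svec_idx d) (Amat d {..<T} \<omega>) v"
proof -
  let ?I = "svec_idx d"
  let ?w = "\<lambda>t. (\<Sum>p\<in>?I. v p * feature \<omega> t p)^2"
  let ?n = "nsq ?I v"
  have fin: "finite ?I" by (rule svec_idx_finite)
  have blk: "(1 - Zb d m b \<omega>) * (3 / 2 * real m * ?n) \<le> (\<Sum>t\<in>Bk m b. ?w t)" for b
  proof (cases "Zb d m b \<omega> = 0")
    case True
    then have F: "Fdev d (Bk m b) \<omega> \<le> (real (card (Bk m b)))^2 / 4"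
      unfolding Zb_def Bk_def by (auto split: if_splits)
    have "3 / 2 * real (card (Bk m b)) * ?n \<le> qf ?I (Amat d (Bk m b) \<omega>) v"
      by (rule block_good[OF fin refl F])
    then show ?thesis using True unfolding qf_Amat by (simp add: Bk_def)
  next
    case False
    then have "Zb d m b \<omega> = 1" unfolding Zb_def by (auto split: if_splits)
    then show ?thesis by (simp add: sum_nonneg)
  qed
  have "(\<Sum>b<k. (1 - Zb d m b \<omega>) * (3 / 2 * real m * ?n)) \<le> (\<Sum>b<k. \<Sum>t\<in>Bk m b. ?w t)"
    by (intro sum_mono blk)
  also have "(\<Sum>b<k. \<Sum>t\<in>Bk m b. ?w t) = (\<Sum>t<k * m. ?w t)"
    unfolding Bk_def by (rule sum.nat_group)
  also have "\<dots> \<le> (\<Sum>t<T. ?w t)"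
    using km by (intro sum_mono2) auto
  also have "\<dots> = qf ?I (Amat d {..<T} \<omega>) v" unfolding qf_Amat ..
  finally have 1: "(\<Sum>b<k. (1 - Zb d m b \<omega>) * (3 / 2 * real m * ?n)) \<le> qf ?I (Amat d {..<T} \<omega>) v" .
  have "(\<Sum>b<k. (1 - Zb d m b \<omega>) * (3 / 2 * real m * ?n)) = (real k - (\<Sum>b<k. Zb d m b \<omega>)) * (3 / 2 * real m * ?n)"
  proof -
    have "(\<Sum>b<k. (1 - Zb d m b \<omega>) * (3 / 2 * real m * ?n)) = (\<Sum>b<k. (1 - Zb d m b \<omega>)) * (3 / 2 * real m * ?n)"
      by (rule sum_distrib_right[symmetric])
    moreover have "(\<Sum>b<k. (1 - Zb d m b \<omega>)) = real k - (\<Sum>b<k. Zb d m b \<omega>)"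
      by (simp add: sum_subtractf)
    ultimately show ?thesis by simp
  qed
  also have "\<dots> \<ge> (3 * real k / 4) * (3 / 2 * real m * ?n)"
    using Z nsq_nonneg[of ?I v] by (intro mult_right_mono) auto
  finally have "(3 * real k / 4) * (3 / 2 * real m * ?n) \<le> qf ?I (Amat d {..<T} \<omega>) v" using 1 by linarith
  then show ?thesis by (simp add: algebra_simps)
qed

lemma ln_c_ge: "ln (430080::real) \<ge> 9"
proof -
  have "exp (9::real) = exp 1 ^ 9" by (simp add: exp_of_nat_mult[symmetric])
  also have "\<dots> \<le> 3 ^ 9" by (intro power_mono exp_le) auto
  also have "\<dots> \<le> (430080::real)" by simp
  finally have "exp 9 \<le> (430080::real)" .
  then show ?thesis by (simp add: ln_ge_iff)
qed

theorem proposition1: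
  shows "\<exists>c>0. \<forall>(d::nat) (\<delta>::real) (T::nat). d \<ge> 1 \<longrightarrow> 0 < \<delta> \<longrightarrow> \<delta> < 1 \<longrightarrow>
     real T \<ge> c * real d ^ 4 * ln (c * real d ^ 2 / \<delta>) \<longrightarrow>
     measure (gauss_samples T d)
       {\<omega> \<in> space (gauss_samples T d).
          lambda_min (svec_idx d)
            (\<lambda>p q. \<Sum>t<T. feature \<omega> t p * feature \<omega> t q) > real T}
     \<ge> 1 - \<delta>"
proof (intro exI[of _ "430080::real"] conjI allI impI)
  fix d :: nat and \<delta> :: real and T :: nat
  assume d: "d \<ge> 1" and \<delta>0: "0 < \<delta>" and \<delta>1: "\<delta> < 1"
    and TT: "real T \<ge> 430080 * real d ^ 4 * ln (430080 * real d ^ 2 / \<delta>)"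
  define m where "m = 13440 * d^4"
  define k where "k = T div m"
  let ?G = "gauss_samples T d"
  let ?I = "svec_idx d"
  interpret prob_space ?G by (rule prob_space_gs)
  have mpos: "m > 0" unfolding m_def using d by simp
  have rm: "real m = 13440 * real d ^ 4" unfolding m_def by simp
  have d4: "real d ^ 4 \<ge> 1" using d by simp
  have lnd: "ln (real d ^ 2) \<ge> 0" using d by simp
  have "ln (430080 * real d ^ 2 / \<delta>) = ln 430080 + ln (real d ^ 2) + ln (1 / \<delta>)"
    using d \<delta>0 by (simp add: ln_mult ln_div)
  also have "\<dots> \<ge> 9 + ln (1 / \<delta>)" using ln_c_ge lnd by linarith
  finally have lnb: "ln (430080 * real d ^ 2 / \<delta>) \<ge> 9 + ln (1 / \<delta>)" .
  have lnpos: "ln (1 / \<delta>) \<ge> 0" using \<delta>0 \<delta>1 by simp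
  have "real T \<ge> 32 * real m * (9 + ln (1 / \<delta>))"
  proof -
    have "32 * real m * (9 + ln (1 / \<delta>)) \<le> 32 * real m * ln (430080 * real d ^ 2 / \<delta>)"
      using lnb mpos by (intro mult_left_mono) auto
    also have "\<dots> = 430080 * real d ^ 4 * ln (430080 * real d ^ 2 / \<delta>)" unfolding rm by simp
    finally show ?thesis using TT by linarith
  qed
  moreover have Tk: "real T < (real k + 1) * real m"
  proof -
    have "T < (k + 1) * m" unfolding k_def using mpos
      by (metis add.commute div_mult_mod_eq mod_less_divisor mult_Suc nat_add_left_cancel_less plus_1_eq_Suc)
    then have "real T < real ((k + 1) * m)" by linarith
    then show ?thesis by (simp only: of_nat_mult of_nat_add of_nat_1)
  qed
  ultimately have "32 * (9 + ln (1 / \<delta>)) * real m < (real k + 1) * real m"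
    by (simp add: mult_ac)
  then have kb: "real k + 1 > 32 * (9 + ln (1 / \<delta>))"
    using mpos by (simp add: mult_less_cancel_right_pos)
  have kb': "288 + 32 * ln (1 / \<delta>) < real k + 1" using kb by (simp add: algebra_simps)
  have k8: "real k \<ge> 8" using kb' lnpos by linarith
  have k1: "k \<ge> 1" using k8 by simp
  have km: "k * m \<le> T" unfolding k_def by simp
  have Tlt: "real T < 9 / 8 * real k * real m"
  proof -
    have "real T < (real k + 1) * real m" by (rule Tk)
    also have "\<dots> \<le> 9 / 8 * real k * real m" using k8 mpos by (intro mult_right_mono) auto
    finally show ?thesis .
  qed
  have expb: "exp (- real k / 32) \<le> \<delta>"
  proof -
    have "ln (1 / \<delta>) \<le> real k / 32" using kb' by linarith
    then have "exp (- real k / 32) \<le> exp (- ln (1 / \<delta>))" by simp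
    also have "\<dots> = \<delta>" using \<delta>0 by (simp add: ln_div exp_minus)
    finally show ?thesis .
  qed
  define E where "E = {\<omega> \<in> space ?G. lambda_min ?I (\<lambda>p q. \<Sum>t<T. feature \<omega> t p * feature \<omega> t q) > real T}"
  define Bad where "Bad = {\<omega> \<in> space ?G. (\<Sum>b<k. Zb d m b \<omega>) \<ge> real k / 4}"
  have Esets: "E \<in> sets ?G" unfolding E_def by (rule event_measurable[OF d])
  have Bsets: "Bad \<in> sets ?G" unfolding Bad_def by measurable
  have sub: "space ?G - Bad \<subseteq> E"
  proof
    fix \<omega> assume w: "\<omega> \<in> space ?G - Bad"
    then have Z: "(\<Sum>b<k. Zb d m b \<omega>) < real k / 4" unfolding Bad_def by auto
    have AM: "(\<lambda>p q. \<Sum>t<T. feature \<omega> t p * feature \<omega> t q) = Amat d {..<T} \<omega>"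
      by (simp add: Amat_def fun_eq_iff)
    have sym: "\<forall>p\<in>?I. \<forall>q\<in>?I. Amat d {..<T} \<omega> p q = Amat d {..<T} \<omega> q p"
      by (simp add: Amat_def mult.commute)
    have "9 / 8 * real k * real m \<le> lambda_min ?I (Amat d {..<T} \<omega>)"
      using det_good[OF d mpos km Z]
      by (intro lambda_min_ge[OF svec_idx_finite svec_idx_ne[OF d] sym]) simp
    then have "lambda_min ?I (\<lambda>p q. \<Sum>t<T. feature \<omega> t p * feature \<omega> t q) > real T"
      unfolding AM using Tlt by linarith
    then show "\<omega> \<in> E" unfolding E_def using w by blast
  qed
  have "1 - \<delta> \<le> 1 - prob Bad"
    using hoeffding_step[OF d k1 km m_def] expb unfolding Bad_def by linarith
  also have "\<dots> = prob (space ?G - Bad)" by (rule prob_compl[OF Bsets, symmetric])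
  also have "\<dots> \<le> prob E" by (rule finite_measure_mono[OF sub Esets])
  finally show "1 - \<delta> \<le> measure ?G {\<omega> \<in> space ?G. lambda_min ?I (\<lambda>p q. \<Sum>t<T. feature \<omega> t p * feature \<omega> t q) > real T}"
    unfolding E_def .
qed simp

end
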